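(* Let $H\ge 1$ and $m\ge 1$ be integers and let $V_0\in\mathbb{R}^{|\mathcal S|}$ be arbitrary. Consider the iteration (generalized policy iteration with lookahead): for $k=0,1,2,\dots$, let $(\mu_{k+1},\nu_{k+1})$ be an $H$-step lookahead policy pair for $V_k$, i.e. a pair of stationary randomized policies satisfying $T_{\mu_{k+1},\nu_{k+1}}(T^{H-1}V_k)=T^{H}V_k$, and set $$V_{k+1}=T_{\mu_{k+1},\nu_{k+1}}^{m}\,T^{H-1}V_k .$$ Then for every $k\ge 0$, $$\|V_k-J^*\|_\infty\le\Big(\alpha^{H-1}+(1+\alpha^m)\frac{\alpha^{H-1}}{1-\alpha}(1+\alpha)\Big)^k\|V_0-J^*\|_\infty .$$ In particular, if $H$ and $m$ satisfy $\alpha^{H-1}+2(1+\alpha^m)\frac{\alpha^{H-1}}{1-\alpha}<1$, then $V_k\to J^*$ exponentially fast.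
   Context: A two-player zero-sum discounted Markov game has a finite state space $\mathcal S$, finite action sets $\mathcal U(s)$ (maximizer) and $\mathcal V(s)$ (minimizer) at each state $s$, transition probabilities $P(s'|s,u,v)$, reward $g(s,u,v)\in[0,1]$, and discount factor $\alpha\in(0,1)$. A (stationary randomized) policy pair $(\mu,\nu)$ assigns to each $s$ distributions $\mu(s)\in\Delta(\mathcal U(s))$, $\nu(s)\in\Delta(\mathcal V(s))$. For $V\in\mathbb{R}^{|\mathcal S|}$ and $s\in\mathcal S$ let $A_{V,s}\in\mathbb{R}^{|\mathcal U(s)|\times|\mathcal V(s)|}$ be $A_{V,s}(u,v)=g(s,u,v)+\alpha\sum_{s'}P(s'|s,u,v)V(s')$. Define $T_{\mu,\nu}V(s)=\mu(s)^\top A_{V,s}\nu(s)$ and the Bellman operator $TV(s)=\max_{p\in\Delta(\mathcal U(s))}\min_{q\in\Delta(\mathcal V(s))}p^\top A_{V,s}q$. $J^{\mu,\nu}$ denotes the unique fixed point of $T_{\mu,\nu}$ (the expected discounted reward of $(\mu,\nu)$), and $J^*$ denotes the unique fixed point of $T$ (the Nash equilibrium value of the game). $T^j$ and $T_{\mu,\nu}^j$ denote $j$-fold compositions, $T^0$ is the identity. *)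

theory Defs
  imports "HOL-Analysis.Analysis"
begin

definition is_distr :: "'a set \<Rightarrow> ('a \<Rightarrow> real) \<Rightarrow> bool" where
  "is_distr A p \<longleftrightarrow> (\<forall>a. 0 \<le> p a) \<and> (\<forall>a. a \<notin> A \<longrightarrow> p a = 0) \<and> sum p A = 1"

definition Amat :: "('s \<Rightarrow> 'u \<Rightarrow> 'v \<Rightarrow> real) \<Rightarrow> ('s \<Rightarrow> 'u \<Rightarrow> 'v \<Rightarrow> 's \<Rightarrow> real) \<Rightarrow> real
    \<Rightarrow> ('s::finite \<Rightarrow> real) \<Rightarrow> 's \<Rightarrow> 'u \<Rightarrow> 'v \<Rightarrow> real" where
  "Amat g P \<alpha> V s u v = g s u v + \<alpha> * (\<Sum>s'\<in>UNIV. P s u v s' * V s')"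

definition bil :: "'u set \<Rightarrow> 'v set \<Rightarrow> ('u \<Rightarrow> real) \<Rightarrow> ('u \<Rightarrow> 'v \<Rightarrow> real) \<Rightarrow> ('v \<Rightarrow> real) \<Rightarrow> real" where
  "bil U W p A q = (\<Sum>u\<in>U. \<Sum>v\<in>W. p u * A u v * q v)"

definition Tpol :: "('s \<Rightarrow> 'u set) \<Rightarrow> ('s \<Rightarrow> 'v set) \<Rightarrow> ('s \<Rightarrow> 'u \<Rightarrow> 'v \<Rightarrow> real)
    \<Rightarrow> ('s \<Rightarrow> 'u \<Rightarrow> 'v \<Rightarrow> 's \<Rightarrow> real) \<Rightarrow> real
    \<Rightarrow> ('s \<Rightarrow> 'u \<Rightarrow> real) \<Rightarrow> ('s \<Rightarrow> 'v \<Rightarrow> real) \<Rightarrow> ('s::finite \<Rightarrow> real) \<Rightarrow> 's \<Rightarrow> real" where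
  "Tpol U W g P \<alpha> \<mu> \<nu> V s = bil (U s) (W s) (\<mu> s) (Amat g P \<alpha> V s) (\<nu> s)"

text \<open>Bellman (Shapley) operator: max over p, min over q (attained by compactness,
  written with Sup/Inf).\<close>
definition Tbell :: "('s \<Rightarrow> 'u set) \<Rightarrow> ('s \<Rightarrow> 'v set) \<Rightarrow> ('s \<Rightarrow> 'u \<Rightarrow> 'v \<Rightarrow> real)
    \<Rightarrow> ('s \<Rightarrow> 'u \<Rightarrow> 'v \<Rightarrow> 's \<Rightarrow> real) \<Rightarrow> real \<Rightarrow> ('s::finite \<Rightarrow> real) \<Rightarrow> 's \<Rightarrow> real" where
  "Tbell U W g P \<alpha> V s =
     (SUP p\<in>{p. is_distr (U s) p}. INF q\<in>{q. is_distr (W s) q}.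
        bil (U s) (W s) p (Amat g P \<alpha> V s) q)"

definition supnorm :: "('s::finite \<Rightarrow> real) \<Rightarrow> real" where
  "supnorm f = Max (range (\<lambda>s. \<bar>f s\<bar>))"

end

theory Submission
  imports Defs
begin

lemma supnorm_ge: "\<bar>f s\<bar> \<le> supnorm (f::'s::finite \<Rightarrow> real)"
  unfolding supnorm_def by (rule Max_ge) auto

lemma supnorm_le: "(\<And>s. \<bar>f s\<bar> \<le> c) \<Longrightarrow> supnorm (f::'s::finite \<Rightarrow> real) \<le> c"
  unfolding supnorm_def by (subst Max_le_iff) auto

lemma supnorm_nonneg: "0 \<le> supnorm (f::'s::finite \<Rightarrow> real)"
  using supnorm_ge[of f undefined] by linarith

lemma supnorm_tri: "supnorm (\<lambda>s. f s - h s) \<le> supnorm (\<lambda>s. f s - g s) + supnorm (\<lambda>s. g s - (h s::real))"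
  for f :: "'s::finite \<Rightarrow> real"
proof (rule supnorm_le)
  fix s
  have "\<bar>f s - h s\<bar> \<le> \<bar>f s - g s\<bar> + \<bar>g s - h s\<bar>" by linarith
  also have "\<dots> \<le> supnorm (\<lambda>s. f s - g s) + supnorm (\<lambda>s. g s - (h s::real))"
    using supnorm_ge[of "\<lambda>s. f s - g s" s] supnorm_ge[of "\<lambda>s. g s - h s" s] by linarith
  finally show "\<bar>f s - h s\<bar> \<le> \<dots>" .
qed

lemma bil_le:
  assumes "finite U" "finite W" "is_distr U p" "is_distr W q"
    and le: "\<And>u v. u\<in>U \<Longrightarrow> v\<in>W \<Longrightarrow> A u v \<le> B u v + c"
  shows "bil U W p A q \<le> bil U W p B q + c"
proof -
  have p: "\<And>u. 0 \<le> p u" "sum p U = 1" and q: "\<And>v. 0 \<le> q v" "sum q W = 1"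
    using assms(3,4) unfolding is_distr_def by auto
  have "bil U W p A q \<le> (\<Sum>u\<in>U. \<Sum>v\<in>W. p u * (B u v + c) * q v)"
    unfolding bil_def
    by (intro sum_mono mult_right_mono mult_left_mono le p q)
  also have "\<dots> = (\<Sum>u\<in>U. \<Sum>v\<in>W. p u * B u v * q v) + (\<Sum>u\<in>U. p u * c * (\<Sum>v\<in>W. q v))"
    by (simp add: algebra_simps sum.distrib sum_distrib_left)
  also have "\<dots> = bil U W p B q + c"
    by (simp add: bil_def q p flip: sum_distrib_right)
  finally show ?thesis .
qed

lemma supinf_le:
  fixes F G :: "'p \<Rightarrow> 'q \<Rightarrow> real"
  assumes "Ps \<noteq> {}" "Qs \<noteq> {}"
    and le: "\<And>p q. p\<in>Ps \<Longrightarrow> q\<in>Qs \<Longrightarrow> F p q \<le> G p q + c"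
    and bF: "\<And>p q. p\<in>Ps \<Longrightarrow> q\<in>Qs \<Longrightarrow> \<bar>F p q\<bar> \<le> M"
    and bG: "\<And>p q. p\<in>Ps \<Longrightarrow> q\<in>Qs \<Longrightarrow> \<bar>G p q\<bar> \<le> M"
  shows "(SUP p\<in>Ps. INF q\<in>Qs. F p q) \<le> (SUP p\<in>Ps. INF q\<in>Qs. G p q) + c"
proof -
  obtain q0 where q0: "q0 \<in> Qs" using assms(2) by blast
  have bdF: "bdd_below (F p ` Qs)" if "p \<in> Ps" for p
    using bF that by (intro bdd_belowI2[where m="-M"]) (fastforce simp: abs_le_iff)
  have bdG: "bdd_below (G p ` Qs)" if "p \<in> Ps" for p
    using bG that by (intro bdd_belowI2[where m="-M"]) (fastforce simp: abs_le_iff)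
  have "(INF q\<in>Qs. G p q) \<le> M" if "p \<in> Ps" for p
    using cINF_lower[OF bdG[OF that] q0] bG[OF that q0] by linarith
  hence bdS: "bdd_above ((\<lambda>p. INF q\<in>Qs. G p q) ` Ps)"
    by (intro bdd_aboveI2[where M=M]) auto
  have step: "(INF q\<in>Qs. F p q) \<le> (INF q\<in>Qs. G p q) + c" if p: "p \<in> Ps" for p
  proof -
    have "(INF q\<in>Qs. F p q) - c \<le> (INF q\<in>Qs. G p q)"
    proof (rule cINF_greatest[OF assms(2)])
      fix q assume "q \<in> Qs"
      thus "(INF q\<in>Qs. F p q) - c \<le> G p q"
        using cINF_lower[OF bdF[OF p] \<open>q\<in>Qs\<close>] le[OF p \<open>q\<in>Qs\<close>] by linarith
    qed
    thus ?thesis by linarith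
  qed
  show ?thesis
  proof (rule cSUP_least[OF assms(1)])
    fix p assume p: "p \<in> Ps"
    show "(INF q\<in>Qs. F p q) \<le> (SUP p\<in>Ps. INF q\<in>Qs. G p q) + c"
      using step[OF p] cSUP_upper[OF p bdS] by linarith
  qed
qed

lemma distr_ex: "finite A \<Longrightarrow> A \<noteq> {} \<Longrightarrow> \<exists>p. is_distr A p"
  by (rule exI[of _ "\<lambda>a. if a \<in> A then 1 / card A else 0"])
     (auto simp: is_distr_def card_gt_0_iff)

lemma bil_abs:
  assumes "finite U" "finite W" "is_distr U p" "is_distr W q"
  shows "\<bar>bil U W p A q\<bar> \<le> (\<Sum>u\<in>U. \<Sum>v\<in>W. \<bar>A u v\<bar>)"
proof -
  let ?M = "(\<Sum>u\<in>U. \<Sum>v\<in>W. \<bar>A u v\<bar>)"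
  have le: "\<bar>A u v\<bar> \<le> ?M" if "u \<in> U" "v \<in> W" for u v
  proof -
    have "\<bar>A u v\<bar> \<le> (\<Sum>v\<in>W. \<bar>A u v\<bar>)"
      using that assms by (intro member_le_sum) auto
    also have "\<dots> \<le> ?M" using that assms by (intro member_le_sum[where f="\<lambda>u. \<Sum>v\<in>W. \<bar>A u v\<bar>"]) (auto intro: sum_nonneg)
    finally show ?thesis .
  qed
  have "bil U W p A q \<le> bil U W p (\<lambda>_ _. 0) q + ?M"
    by (intro bil_le[OF assms]) (use le in \<open>auto simp: abs_le_iff\<close>)
  moreover have "bil U W p (\<lambda>_ _. 0) q \<le> bil U W p A q + ?M"
    by (intro bil_le[OF assms]) (use le in \<open>force simp: abs_le_iff\<close>)
  ultimately show ?thesis by (simp add: bil_def abs_le_iff)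
qed

theorem theorem1:
  fixes U :: "'s::finite \<Rightarrow> 'u set" and W :: "'s \<Rightarrow> 'v set"
    and g :: "'s \<Rightarrow> 'u \<Rightarrow> 'v \<Rightarrow> real" and P :: "'s \<Rightarrow> 'u \<Rightarrow> 'v \<Rightarrow> 's \<Rightarrow> real"
    and \<alpha> :: real and H m :: nat
    and Jstar :: "'s \<Rightarrow> real"
    and V :: "nat \<Rightarrow> 's \<Rightarrow> real"
    and \<mu> :: "nat \<Rightarrow> 's \<Rightarrow> 'u \<Rightarrow> real" and \<nu> :: "nat \<Rightarrow> 's \<Rightarrow> 'v \<Rightarrow> real"
  assumes U_fin: "\<And>s. finite (U s) \<and> U s \<noteq> {}"
    and W_fin: "\<And>s. finite (W s) \<and> W s \<noteq> {}"
    and P_nonneg: "\<And>s u v s'. u \<in> U s \<Longrightarrow> v \<in> W s \<Longrightarrow> 0 \<le> P s u v s'"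
    and P_sum: "\<And>s u v. u \<in> U s \<Longrightarrow> v \<in> W s \<Longrightarrow> (\<Sum>s'\<in>UNIV. P s u v s') = 1"
    and g_range: "\<And>s u v. u \<in> U s \<Longrightarrow> v \<in> W s \<Longrightarrow> 0 \<le> g s u v \<and> g s u v \<le> 1"
    and alpha: "0 < \<alpha>" "\<alpha> < 1"
    and H: "1 \<le> H" and m: "1 \<le> m"
    and Jstar_fix: "Tbell U W g P \<alpha> Jstar = Jstar"
    and pol: "\<And>k s. is_distr (U s) (\<mu> (Suc k) s) \<and> is_distr (W s) (\<nu> (Suc k) s)"
    and lookahead: "\<And>k. Tpol U W g P \<alpha> (\<mu> (Suc k)) (\<nu> (Suc k))
                           (((Tbell U W g P \<alpha>) ^^ (H - 1)) (V k))
                         = ((Tbell U W g P \<alpha>) ^^ H) (V k)"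
    and iter: "\<And>k. V (Suc k) = ((Tpol U W g P \<alpha> (\<mu> (Suc k)) (\<nu> (Suc k))) ^^ m)
                                 (((Tbell U W g P \<alpha>) ^^ (H - 1)) (V k))"
  shows "(\<forall>k. supnorm (\<lambda>s. V k s - Jstar s)
            \<le> (\<alpha> ^ (H - 1) + (1 + \<alpha> ^ m) * (\<alpha> ^ (H - 1) / (1 - \<alpha>)) * (1 + \<alpha>)) ^ k
               * supnorm (\<lambda>s. V 0 s - Jstar s))
       \<and> (\<alpha> ^ (H - 1) + 2 * (1 + \<alpha> ^ m) * (\<alpha> ^ (H - 1) / (1 - \<alpha>)) < 1 \<longrightarrow>
           (\<exists>\<rho>. 0 \<le> \<rho> \<and> \<rho> < 1 \<and>
              (\<forall>k. supnorm (\<lambda>s. V k s - Jstar s) \<le> \<rho> ^ k * supnorm (\<lambda>s. V 0 s - Jstar s))))"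
proof -
  define T where "T = Tbell U W g P \<alpha>"
  define Tp where "Tp k = Tpol U W g P \<alpha> (\<mu> (Suc k)) (\<nu> (Suc k))" for k
  define N where "N f = supnorm f" for f :: "'s \<Rightarrow> real"
  have sym: "supnorm (\<lambda>s. f s - h s) = supnorm (\<lambda>s. h s - f s)" for f h :: "'s \<Rightarrow> real"
    unfolding supnorm_def by (simp add: abs_minus_commute)
  have Amat_le: "Amat g P \<alpha> V s u v \<le> Amat g P \<alpha> V' s u v + \<alpha> * supnorm (\<lambda>x. V x - V' x)"
    if uv: "u \<in> U s" "v \<in> W s" for V V' s u v
  proof -
    let ?n = "supnorm (\<lambda>x. V x - V' x)"
    have "(\<Sum>s'\<in>UNIV. P s u v s' * V s') \<le> (\<Sum>s'\<in>UNIV. P s u v s' * (V' s' + ?n))"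
    proof (intro sum_mono mult_left_mono P_nonneg[OF uv])
      fix s' show "V s' \<le> V' s' + ?n" using supnorm_ge[of "\<lambda>x. V x - V' x" s'] by linarith
    qed
    also have "\<dots> = (\<Sum>s'\<in>UNIV. P s u v s' * V' s') + ?n"
      using P_sum[OF uv] by (simp add: distrib_left sum.distrib flip: sum_distrib_right)
    finally have "\<alpha> * (\<Sum>s'\<in>UNIV. P s u v s' * V s') \<le> \<alpha> * ((\<Sum>s'\<in>UNIV. P s u v s' * V' s') + ?n)"
      using alpha by (intro mult_left_mono) auto
    thus ?thesis unfolding Amat_def by (simp add: distrib_left)
  qed
  have T_le: "T V s \<le> T V' s + \<alpha> * supnorm (\<lambda>x. V x - V' x)" for V V' s
  proof -
    let ?A = "Amat g P \<alpha> V s" and ?B = "Amat g P \<alpha> V' s"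
    let ?M = "(\<Sum>u\<in>U s. \<Sum>v\<in>W s. \<bar>?A u v\<bar>) + (\<Sum>u\<in>U s. \<Sum>v\<in>W s. \<bar>?B u v\<bar>)"
    have nn: "0 \<le> (\<Sum>u\<in>U s. \<Sum>v\<in>W s. \<bar>C u v\<bar>)" for C :: "'u \<Rightarrow> 'v \<Rightarrow> real"
      by (intro sum_nonneg) auto
    show ?thesis unfolding T_def Tbell_def
    proof (rule supinf_le)
      show "{p. is_distr (U s) p} \<noteq> {}" using distr_ex[of "U s"] U_fin[of s] by auto
      show "{q. is_distr (W s) q} \<noteq> {}" using distr_ex[of "W s"] W_fin[of s] by auto
      fix p q assume pq: "p \<in> {p. is_distr (U s) p}" "q \<in> {q. is_distr (W s) q}"
      show "bil (U s) (W s) p ?A q \<le> bil (U s) (W s) p ?B q + \<alpha> * supnorm (\<lambda>x. V x - V' x)"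
        using pq U_fin W_fin Amat_le by (intro bil_le) auto
      show "\<bar>bil (U s) (W s) p ?A q\<bar> \<le> ?M"
        using bil_abs[of "U s" "W s" p q ?A] pq U_fin W_fin nn[of ?B] by auto
      show "\<bar>bil (U s) (W s) p ?B q\<bar> \<le> ?M"
        using bil_abs[of "U s" "W s" p q ?B] pq U_fin W_fin nn[of ?A] by auto
    qed
  qed
  have T_contr: "supnorm (\<lambda>s. T V s - T V' s) \<le> \<alpha> * supnorm (\<lambda>x. V x - V' x)" for V V'
  proof (rule supnorm_le)
    fix s show "\<bar>T V s - T V' s\<bar> \<le> \<alpha> * supnorm (\<lambda>x. V x - V' x)"
      using T_le[of V s V'] T_le[of V' s V] unfolding sym[of V' V] abs_le_iff by linarith
  qed
  have Tp_le: "Tp k V s \<le> Tp k V' s + \<alpha> * supnorm (\<lambda>x. V x - V' x)" for k V V' s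
    unfolding Tp_def Tpol_def using pol U_fin W_fin Amat_le by (intro bil_le) auto
  have Tp_contr: "supnorm (\<lambda>s. Tp k V s - Tp k V' s) \<le> \<alpha> * supnorm (\<lambda>x. V x - V' x)" for k V V'
  proof (rule supnorm_le)
    fix s show "\<bar>Tp k V s - Tp k V' s\<bar> \<le> \<alpha> * supnorm (\<lambda>x. V x - V' x)"
      using Tp_le[of k V s V'] Tp_le[of k V' s V] unfolding sym[of V' V] abs_le_iff by linarith
  qed
  have Jfix: "(T ^^ j) Jstar = Jstar" for j
    by (induction j) (auto simp: Jstar_fix T_def)
  have Tj: "supnorm (\<lambda>s. (T ^^ j) X s - Jstar s) \<le> \<alpha> ^ j * supnorm (\<lambda>s. X s - Jstar s)" for j X
  proof (induction j)
    case 0 then show ?case by simp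
  next
    case (Suc j)
    have "supnorm (\<lambda>s. (T ^^ Suc j) X s - Jstar s) = supnorm (\<lambda>s. T ((T ^^ j) X) s - T Jstar s)"
      using Jstar_fix by (simp add: T_def)
    also have "\<dots> \<le> \<alpha> * supnorm (\<lambda>s. (T ^^ j) X s - Jstar s)" by (rule T_contr)
    also have "\<dots> \<le> \<alpha> * (\<alpha> ^ j * supnorm (\<lambda>s. X s - Jstar s))"
      using Suc alpha by (intro mult_left_mono) auto
    finally show ?case by (simp add: mult.assoc)
  qed
  define \<rho> where "\<rho> = \<alpha> ^ (H - 1) + (1 + \<alpha> ^ m) * (\<alpha> ^ (H - 1) / (1 - \<alpha>)) * (1 + \<alpha>)"
  have rho_nn: "0 \<le> \<rho>" unfolding \<rho>_def using alpha by (intro add_nonneg_nonneg mult_nonneg_nonneg) auto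
  have step: "supnorm (\<lambda>s. V (Suc k) s - Jstar s) \<le> \<rho> * supnorm (\<lambda>s. V k s - Jstar s)" for k
  proof -
    define e where "e = supnorm (\<lambda>s. V k s - Jstar s)"
    define Wk where "Wk = (T ^^ (H - 1)) (V k)"
    have e0: "0 \<le> e" unfolding e_def by (rule supnorm_nonneg)
    have a: "supnorm (\<lambda>s. Wk s - Jstar s) \<le> \<alpha> ^ (H - 1) * e"
      unfolding Wk_def e_def by (rule Tj)
    have THk: "T Wk = (T ^^ H) (V k)" unfolding Wk_def using H
      by (cases H) auto
    have b: "supnorm (\<lambda>s. T Wk s - Jstar s) \<le> \<alpha> ^ H * e"
      unfolding THk e_def by (rule Tj)
    define c where "c = supnorm (\<lambda>s. T Wk s - Wk s)"
    have c: "c \<le> \<alpha> ^ H * e + \<alpha> ^ (H - 1) * e"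
      using supnorm_tri[where f="T Wk" and g=Jstar and h=Wk] a b sym[of Wk Jstar] unfolding c_def by linarith
    have c0: "0 \<le> c" unfolding c_def by (rule supnorm_nonneg)
    have look: "Tp k Wk = T Wk" using lookahead[of k] THk unfolding Tp_def Wk_def T_def by simp
    have it: "supnorm (\<lambda>s. (Tp k ^^ j) Wk s - Wk s) \<le> c / (1 - \<alpha>)" for j
    proof (induction j)
      case 0 then show ?case using c0 alpha by (simp add: supnorm_def)
    next
      case (Suc j)
      have "supnorm (\<lambda>s. (Tp k ^^ Suc j) Wk s - Wk s)
          \<le> supnorm (\<lambda>s. Tp k ((Tp k ^^ j) Wk) s - Tp k Wk s) + supnorm (\<lambda>s. Tp k Wk s - Wk s)"
        using supnorm_tri[where f="Tp k ((Tp k ^^ j) Wk)" and g="Tp k Wk" and h=Wk] by simp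
      also have "\<dots> \<le> \<alpha> * (c / (1 - \<alpha>)) + c"
      proof -
        have "supnorm (\<lambda>s. Tp k ((Tp k ^^ j) Wk) s - Tp k Wk s) \<le> \<alpha> * supnorm (\<lambda>s. (Tp k ^^ j) Wk s - Wk s)"
          by (rule Tp_contr)
        also have "\<dots> \<le> \<alpha> * (c / (1 - \<alpha>))" using Suc alpha by (intro mult_left_mono) auto
        finally show ?thesis using look c_def by simp
      qed
      also have "\<dots> = c / (1 - \<alpha>)" using alpha by (simp add: field_simps)
      finally show ?case .
    qed
    have "V (Suc k) = (Tp k ^^ m) Wk" using iter[of k] unfolding Tp_def Wk_def T_def by simp
    hence "supnorm (\<lambda>s. V (Suc k) s - Jstar s) \<le> c / (1 - \<alpha>) + \<alpha> ^ (H - 1) * e"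
      using supnorm_tri[where f="V (Suc k)" and g=Wk and h=Jstar] it[of m] a by simp
    also have "\<dots> \<le> \<rho> * e"
    proof -
      have aH: "\<alpha> ^ H = \<alpha> * \<alpha> ^ (H - 1)" using H by (cases H) auto
      have "c / (1 - \<alpha>) \<le> (\<alpha> ^ (H - 1) * (1 + \<alpha>) * e) / (1 - \<alpha>)"
        using c alpha aH by (intro divide_right_mono) (auto simp: algebra_simps)
      also have "\<dots> \<le> (1 + \<alpha> ^ m) * (\<alpha> ^ (H - 1) / (1 - \<alpha>)) * (1 + \<alpha>) * e"
      proof -
        have x: "0 \<le> \<alpha> ^ (H - 1) * (1 + \<alpha>) * e / (1 - \<alpha>)" using alpha e0 by auto
        have "\<alpha> ^ (H - 1) * (1 + \<alpha>) * e / (1 - \<alpha>) \<le> (1 + \<alpha> ^ m) * (\<alpha> ^ (H - 1) * (1 + \<alpha>) * e / (1 - \<alpha>))"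
          using mult_right_mono[OF _ x, of 1 "1 + \<alpha> ^ m"] alpha by simp
        thus ?thesis by (simp add: field_simps)
      qed
      finally show ?thesis unfolding \<rho>_def by (simp add: algebra_simps)
    qed
    finally show ?thesis unfolding e_def .
  qed
  have main: "supnorm (\<lambda>s. V k s - Jstar s) \<le> \<rho> ^ k * supnorm (\<lambda>s. V 0 s - Jstar s)" for k
  proof (induction k)
    case 0 then show ?case by simp
  next
    case (Suc k)
    have "supnorm (\<lambda>s. V (Suc k) s - Jstar s) \<le> \<rho> * supnorm (\<lambda>s. V k s - Jstar s)" by (rule step)
    also have "\<dots> \<le> \<rho> * (\<rho> ^ k * supnorm (\<lambda>s. V 0 s - Jstar s))"
      using Suc rho_nn by (intro mult_left_mono) auto
    finally show ?case by (simp add: mult.assoc)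
  qed
  have "\<rho> \<le> \<alpha> ^ (H - 1) + 2 * (1 + \<alpha> ^ m) * (\<alpha> ^ (H - 1) / (1 - \<alpha>))"
  proof -
    have X: "0 \<le> (1 + \<alpha> ^ m) * (\<alpha> ^ (H - 1) / (1 - \<alpha>))" using alpha by auto
    have i: "(1 + \<alpha> ^ m) * (\<alpha> ^ (H - 1) / (1 - \<alpha>)) * (1 + \<alpha>) \<le> (1 + \<alpha> ^ m) * (\<alpha> ^ (H - 1) / (1 - \<alpha>)) * 2"
      using X alpha by (intro mult_left_mono) auto
    have eq: "2 * (1 + \<alpha> ^ m) * (\<alpha> ^ (H - 1) / (1 - \<alpha>)) = (1 + \<alpha> ^ m) * (\<alpha> ^ (H - 1) / (1 - \<alpha>)) * 2"
      by (simp only: mult.commute mult.left_commute)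
    show ?thesis unfolding \<rho>_def using i eq by linarith
  qed
  then show ?thesis using main rho_nn unfolding \<rho>_def by (auto intro!: exI[of _ \<rho>] simp: \<rho>_def)
qed

end
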